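(* Let $(\Sigma,\mathscr{P})$ be a Kelvin-Planck theory with a Clausius-Duhem pair $(\eta^0,T^0)$ such that every Clausius-Duhem pair $(\eta,T)$ satisfies $T=\alpha T^0$, $\eta=\frac1\alpha\eta^0+\beta$ for some constants $\alpha>0$, $\beta\in\mathbb{R}$. Then: (a) the set of reversible elements of $\hat{\mathscr{P}}$ coincides with the set of all $(\Delta\mathscr{m},\mathscr{q})\in\mathscr{V}(\Sigma)$ satisfying $\int_\Sigma\eta^0\,d(\Delta\mathscr{m})=\int_\Sigma\frac{d\mathscr{q}}{T^0}$; (b) if even one member of $\{(\Delta\mathscr{m},\mathscr{q})\in\mathscr{V}(\Sigma):\int_\Sigma\eta^0\,d(\Delta\mathscr{m})>\int_\Sigma\frac{d\mathscr{q}}{T^0}\}$ belongs to $\hat{\mathscr{P}}$, then all members of this set do; (c) in particular, if $\mathscr{P}$ contains an irreversible process (a member of $\mathscr{P}$ that is not a reversible element), then $\hat{\mathscr{P}}$ contains every $(\Delta\mathscr{m},\mathscr{q})\in\mathscr{V}(\Sigma)$ with $\int_\Sigma\eta^0\,d(\Delta\mathscr{m})\ge\int_\Sigma\frac{d\mathscr{q}}{T^0}$.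
   Context: $\Sigma$ is a compact Hausdorff space. $\mathscr{M}(\Sigma)$ is the vector space of regular signed Borel measures on $\Sigma$ with its weak-star topology; $\mathscr{M}_+(\Sigma)$ the nonnegative members; $\mathscr{M}^\circ(\Sigma)=\{\mu:\mu(\Sigma)=0\}$; $\mathscr{V}(\Sigma)=\mathscr{M}^\circ(\Sigma)\oplus\mathscr{M}(\Sigma)$ with the product topology. For $\mathscr{P}\subset\mathscr{V}(\Sigma)$, $\hat{\mathscr{P}}$ is the closure of the set of nonnegative multiples of members of $\mathscr{P}$. A thermodynamical theory is $(\Sigma,\mathscr{P})$ with $\hat{\mathscr{P}}$ convex; it is Kelvin-Planck if $\hat{\mathscr{P}}\cap\{(0,\nu):\nu\in\mathscr{M}_+(\Sigma)\}=\{(0,0)\}$. A Clausius-Duhem pair is $(\eta,T)$, $\eta\in C(\Sigma,\mathbb{R})$, $T\in C(\Sigma,(0,\infty))$, with $\int_\Sigma\eta\,d(\Delta\mathscr{m})\ge\int_\Sigma\frac{d\mathscr{q}}{T}$ for all $(\Delta\mathscr{m},\mathscr{q})\in\mathscr{P}$. A reversible element is a member of $\hat{\mathscr{P}}$ whose negative also lies in $\hat{\mathscr{P}}$. *)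

theory Defs
  imports "HOL-Analysis.Analysis"
begin

text \<open>Sigma is a type 'a of class t2_space with compact UNIV.
A regular signed Borel measure on Sigma is represented (Riesz-Markov) by the
bounded linear functional f |-> integral of f on C(Sigma,R); as canonical
representative we require value 0 on non-continuous arguments.  Then the
pointwise-convergence topology on functionals (library instance for fun) is
exactly the weak-star topology on the set of measures.\<close>

type_synonym 'a msr = "('a \<Rightarrow> real) \<Rightarrow> real"

definition cfun :: "('a::topological_space \<Rightarrow> real) set" where
  "cfun = {f. continuous_on UNIV f}"

definition signed_measures :: "('a::topological_space) msr set" where
  "signed_measures = {\<mu>.
     (\<forall>f\<in>cfun. \<forall>g\<in>cfun. \<mu> (\<lambda>x. f x + g x) = \<mu> f + \<mu> g) \<and>
     (\<forall>f\<in>cfun. \<forall>c. \<mu> (\<lambda>x. c * f x) = c * \<mu> f) \<and>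
     (\<exists>C. \<forall>f\<in>cfun. \<bar>\<mu> f\<bar> \<le> C * (SUP x. \<bar>f x\<bar>)) \<and>
     (\<forall>f. f \<notin> cfun \<longrightarrow> \<mu> f = 0)}"

definition integ :: "'a msr \<Rightarrow> ('a \<Rightarrow> real) \<Rightarrow> real" where
  "integ \<mu> f = \<mu> f"

definition nonneg_measures :: "('a::topological_space) msr set" where
  "nonneg_measures = {\<mu> \<in> signed_measures.
     \<forall>f\<in>cfun. (\<forall>x. 0 \<le> f x) \<longrightarrow> 0 \<le> integ \<mu> f}"

definition zero_measures :: "('a::topological_space) msr set" where
  "zero_measures = {\<mu> \<in> signed_measures. integ \<mu> (\<lambda>_. 1) = 0}"

definition Vspace :: "('a::topological_space msr \<times> 'a msr) set" where
  "Vspace = zero_measures \<times> signed_measures"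

definition zero_msr :: "'a msr" where
  "zero_msr = (\<lambda>f. 0)"

definition scale_pair :: "real \<Rightarrow> 'a msr \<times> 'a msr \<Rightarrow> 'a msr \<times> 'a msr" where
  "scale_pair c v = ((\<lambda>f. c * fst v f), (\<lambda>f. c * snd v f))"

definition neg_pair :: "'a msr \<times> 'a msr \<Rightarrow> 'a msr \<times> 'a msr" where
  "neg_pair v = ((\<lambda>f. - fst v f), (\<lambda>f. - snd v f))"

definition add_pair :: "'a msr \<times> 'a msr \<Rightarrow> 'a msr \<times> 'a msr \<Rightarrow> 'a msr \<times> 'a msr" where
  "add_pair v w = ((\<lambda>f. fst v f + fst w f), (\<lambda>f. snd v f + snd w f))"

definition convex_pairs :: "('a msr \<times> 'a msr) set \<Rightarrow> bool" where
  "convex_pairs S \<longleftrightarrow> (\<forall>v\<in>S. \<forall>w\<in>S. \<forall>t::real. 0 \<le> t \<and> t \<le> 1 \<longrightarrow>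
     add_pair (scale_pair t v) (scale_pair (1 - t) w) \<in> S)"

definition hat :: "('a::topological_space msr \<times> 'a msr) set \<Rightarrow> ('a msr \<times> 'a msr) set" where
  "hat P = Vspace \<inter> closure {scale_pair c p | c p. 0 \<le> c \<and> p \<in> P}"

definition thermo_theory :: "('a::topological_space msr \<times> 'a msr) set \<Rightarrow> bool" where
  "thermo_theory P \<longleftrightarrow> P \<subseteq> Vspace \<and> convex_pairs (hat P)"

definition kelvin_planck :: "('a::topological_space msr \<times> 'a msr) set \<Rightarrow> bool" where
  "kelvin_planck P \<longleftrightarrow> thermo_theory P \<and>
     hat P \<inter> {(zero_msr, \<nu>) | \<nu>. \<nu> \<in> nonneg_measures} = {(zero_msr, zero_msr)}"

definition clausius_duhem :: "('a::topological_space msr \<times> 'a msr) set \<Rightarrow> ('a \<Rightarrow> real) \<Rightarrow> ('a \<Rightarrow> real) \<Rightarrow> bool" where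
  "clausius_duhem P \<eta> T \<longleftrightarrow> continuous_on UNIV \<eta> \<and> continuous_on UNIV T \<and> (\<forall>x. 0 < T x) \<and>
     (\<forall>(dm, q)\<in>P. integ dm \<eta> \<ge> integ q (\<lambda>x. 1 / T x))"

definition reversible :: "('a::topological_space msr \<times> 'a msr) set \<Rightarrow> 'a msr \<times> 'a msr \<Rightarrow> bool" where
  "reversible P v \<longleftrightarrow> v \<in> hat P \<and> neg_pair v \<in> hat P"

end

theory Submission
  imports Defs "HOL-Analysis.Analysis"
begin


lemma small_t_pos:
  fixes A B :: real
  assumes "B \<ge> 0" "\<And>t. t > 0 \<Longrightarrow> 0 \<le> 2*t*A + t^2*B"
  shows "0 \<le> A"
proof (rule ccontr)
  assume "\<not> 0 \<le> A"
  hence A: "A < 0" by simp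
  define t where "t = -A/(B+1)"
  have t: "t > 0" using A assms(1) unfolding t_def by (intro divide_pos_pos) auto
  have "t*B \<le> -A" proof -
    have "t*B = -A * (B/(B+1))" by (simp add: t_def)
    also have "\<dots> \<le> -A * 1" using A assms(1) by (intro mult_left_mono) auto
    finally show ?thesis by simp
  qed
  hence "2*A + t*B < 0" using A by linarith
  hence "t*(2*A + t*B) < 0" using t by (simp add: mult_pos_neg)
  moreover have "t*(2*A + t*B) = 2*t*A + t^2*B" by (simp add: algebra_simps power2_eq_square)
  ultimately show False using assms(2)[OF t] by linarith
qed

lemma small_s_neg:
  fixes A B :: real
  assumes "B \<ge> 0" "\<And>s. 0 < s \<Longrightarrow> s < 1 \<Longrightarrow> 2*A \<le> s * B"
  shows "A \<le> 0"
proof (rule ccontr)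
  assume "\<not> A \<le> 0" hence A: "A > 0" by simp
  define s where "s = min (1/2) (A/(B+1))"
  have s: "0 < s" "s < 1" using A assms(1) by (auto simp: s_def)
  have "s * B \<le> (A/(B+1))*B" using assms(1) by (intro mult_right_mono) (auto simp: s_def)
  also have "\<dots> \<le> A" using A assms(1) by (simp add: field_simps)
  finally show False using assms(2)[OF s] A by linarith
qed

lemma fin_sep:
  fixes D :: "('i \<Rightarrow> real) set" and z :: "'i \<Rightarrow> real"
  assumes S: "finite S"
  and van: "\<And>d i. d \<in> D \<Longrightarrow> i \<notin> S \<Longrightarrow> d i = 0"
  and zero: "(\<lambda>_. 0) \<in> D"
  and add: "\<And>d e. d \<in> D \<Longrightarrow> e \<in> D \<Longrightarrow> (\<lambda>i. d i + e i) \<in> D"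
  and scal: "\<And>d c. d \<in> D \<Longrightarrow> c \<ge> 0 \<Longrightarrow> (\<lambda>i. c * d i) \<in> D"
  and far: "\<And>d. d \<in> D \<Longrightarrow> \<exists>i\<in>S. e \<le> \<bar>d i - z i\<bar>"
  and e: "e > 0"
  shows "\<exists>a. (\<Sum>i\<in>S. a i * z i) < 0 \<and> (\<forall>d\<in>D. 0 \<le> (\<Sum>i\<in>S. a i * d i))"
proof -
  define Cl where "Cl = closure D"
  have DCl: "D \<subseteq> Cl" unfolding Cl_def by (rule closure_subset)
  have clos_inv: "f ` Cl \<subseteq> Cl" if "continuous_on UNIV f" "f ` D \<subseteq> D" for f :: "('i \<Rightarrow> real) \<Rightarrow> ('i \<Rightarrow> real)"
    unfolding Cl_def
    by (rule image_closure_subset) (use that closure_subset in \<open>auto intro: continuous_on_subset\<close>)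
  have vanCl: "y i = 0" if "y \<in> Cl" "i \<notin> S" for y i
  proof -
    have "closed {x::'i\<Rightarrow>real. x i = 0}" by (intro closed_Collect_eq continuous_intros) auto
    moreover have "D \<subseteq> {x. x i = 0}" using van that(2) by auto
    ultimately have "Cl \<subseteq> {x. x i = 0}" unfolding Cl_def by (rule closure_minimal[rotated])
    thus ?thesis using that by auto
  qed
  have farCl: "\<exists>i\<in>S. e \<le> \<bar>y i - z i\<bar>" if "y \<in> Cl" for y
  proof -
    have "{x::'i\<Rightarrow>real. \<exists>i\<in>S. e \<le> \<bar>x i - z i\<bar>} = (\<Union>i\<in>S. {x. e \<le> \<bar>x i - z i\<bar>})" by auto
    moreover have "closed (\<Union>i\<in>S. {x::'i\<Rightarrow>real. e \<le> \<bar>x i - z i\<bar>})"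
      using S by (intro closed_UN ballI closed_Collect_le continuous_intros) auto
    ultimately have "closed {x::'i\<Rightarrow>real. \<exists>i\<in>S. e \<le> \<bar>x i - z i\<bar>}" by simp
    moreover have "D \<subseteq> {x. \<exists>i\<in>S. e \<le> \<bar>x i - z i\<bar>}" using far by auto
    ultimately have "Cl \<subseteq> {x. \<exists>i\<in>S. e \<le> \<bar>x i - z i\<bar>}" unfolding Cl_def by (rule closure_minimal[rotated])
    thus ?thesis using that by auto
  qed
  define Q where "Q x = (\<Sum>i\<in>S. (x i - z i)^2)" for x :: "'i \<Rightarrow> real"
  define R where "R = (\<Sum>i\<in>S. \<bar>z i\<bar> + (z i)^2) + 1"
  define X where "X i = (if i \<in> S then {z i - R .. z i + R} else {0::real})" for i
  define B where "B = PiE UNIV X"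
  have "compactin (product_topology (\<lambda>i. euclidean) UNIV) B"
    unfolding B_def compactin_PiE by (auto simp: X_def)
  hence cB: "compact B" by (simp add: euclidean_product_topology)
  have cCl: "closed Cl" unfolding Cl_def by simp
  have cK: "compact (Cl \<inter> B)" using cB cCl by (simp add: closed_Int_compact)
  have zR: "\<bar>z i\<bar> \<le> R" if "i \<in> S" for i
  proof -
    have "\<bar>z i\<bar> + (z i)^2 \<le> (\<Sum>i\<in>S. \<bar>z i\<bar> + (z i)^2)"
      using S that by (intro member_le_sum) auto
    moreover have "(z i)^2 \<ge> 0" by simp
    ultimately show ?thesis unfolding R_def by linarith
  qed
  have R1: "R \<ge> 1" unfolding R_def by (simp add: sum_nonneg)
  have Q0: "Q (\<lambda>_. 0) \<le> R^2"
  proof -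
    have "Q (\<lambda>_. 0) = (\<Sum>i\<in>S. (z i)^2)" by (simp add: Q_def)
    also have "\<dots> \<le> (\<Sum>i\<in>S. \<bar>z i\<bar> + (z i)^2)" by (intro sum_mono) auto
    also have "\<dots> \<le> R" unfolding R_def by simp
    also have "\<dots> \<le> R^2" using R1 by (simp add: power2_eq_square)
    finally show ?thesis .
  qed
  have zeroK: "(\<lambda>_. 0) \<in> Cl \<inter> B" using zero DCl zR by (force simp: B_def X_def abs_le_iff)
  have contQ: "continuous_on A Q" for A
    unfolding Q_def by (intro continuous_intros continuous_on_subset[OF continuous_on_product_coordinates]) auto
  obtain m where mK: "m \<in> Cl \<inter> B" and mmin: "\<And>y. y \<in> Cl \<inter> B \<Longrightarrow> Q m \<le> Q y"
    using continuous_attains_inf[OF cK _ contQ] zeroK by blast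
  have Qge: "(y i - z i)^2 \<le> Q y" if "i \<in> S" for y i
    unfolding Q_def using S that by (intro member_le_sum) auto
  have mmin': "Q m \<le> Q y" if "y \<in> Cl" for y
  proof (cases "y \<in> B")
    case True thus ?thesis using that mmin by auto
  next
    case False
    then obtain i where "y i \<notin> X i" by (auto simp: B_def)
    moreover have "i \<notin> S \<Longrightarrow> y i = 0" using vanCl that by auto
    ultimately have i: "i \<in> S" and "\<bar>y i - z i\<bar> > R" by (auto simp: X_def split: if_splits)
    hence "R^2 < (y i - z i)^2" using R1
      using power_strict_mono[of R "\<bar>y i - z i\<bar>" 2] by simp
    moreover have "Q m \<le> Q (\<lambda>_. 0)" using mmin zeroK by auto
    ultimately show ?thesis using Qge[OF i, of y] Q0 by linarith
  qed
  define a where "a i = m i - z i" for i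
  have mCl: "m \<in> Cl" using mK by auto
  have Qpos: "Q m > 0"
  proof -
    obtain i where "i \<in> S" "e \<le> \<bar>m i - z i\<bar>" using farCl[OF mCl] by auto
    hence "e^2 \<le> (m i - z i)^2" using e by (metis abs_le_square_iff abs_of_pos less_imp_le)
    thus ?thesis using Qge[OF \<open>i \<in> S\<close>, of m] e by (smt (verit) zero_less_power)
  qed
  have dir: "0 \<le> (\<Sum>i\<in>S. a i * d i)" if d: "d \<in> D" for d
  proof (rule small_t_pos[where B = "\<Sum>i\<in>S. (d i)^2"])
    show "0 \<le> (\<Sum>i\<in>S. (d i)^2)" by (simp add: sum_nonneg)
    fix t :: real assume t: "t > 0"
    let ?y = "\<lambda>i. m i + t * d i"
    have "(\<lambda>x. \<lambda>i. x i + t * d i) ` D \<subseteq> D" using add scal d t by auto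
    moreover have "continuous_on UNIV (\<lambda>x::'i\<Rightarrow>real. \<lambda>i. x i + t * d i)"
      by (intro continuous_intros continuous_on_product_coordinates)
    ultimately have "?y \<in> Cl" using clos_inv mCl by blast
    hence "Q m \<le> Q ?y" by (rule mmin')
    also have "Q ?y = (\<Sum>i\<in>S. (m i - z i)^2 + (2*t*(a i * d i) + t^2 * (d i)^2))"
      unfolding Q_def a_def by (intro sum.cong) (auto simp: power2_eq_square algebra_simps)
    also have "\<dots> = Q m + (2*t*(\<Sum>i\<in>S. a i * d i) + t^2 * (\<Sum>i\<in>S. (d i)^2))"
      by (simp add: Q_def sum.distrib sum_distrib_left)
    finally show "0 \<le> 2*t*(\<Sum>i\<in>S. a i * d i) + t^2 * (\<Sum>i\<in>S. (d i)^2)" by simp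
  qed
  have am: "(\<Sum>i\<in>S. a i * m i) \<le> 0"
  proof (rule small_s_neg[where B = "\<Sum>i\<in>S. (m i)^2"])
    show "0 \<le> (\<Sum>i\<in>S. (m i)^2)" by (simp add: sum_nonneg)
    fix s :: real assume s: "0 < s" "s < 1"
    let ?y = "\<lambda>i. (1 - s) * m i"
    have "(\<lambda>x. \<lambda>i. (1 - s) * x i) ` D \<subseteq> D" using scal s by auto
    moreover have "continuous_on UNIV (\<lambda>x::'i\<Rightarrow>real. \<lambda>i. (1 - s) * x i)"
      by (intro continuous_intros continuous_on_product_coordinates)
    ultimately have "?y \<in> Cl" using clos_inv mCl by blast
    hence "Q m \<le> Q ?y" by (rule mmin')
    also have "Q ?y = (\<Sum>i\<in>S. (m i - z i)^2 + (s^2 * (m i)^2 - 2 * s * (a i * m i)))"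
      unfolding Q_def a_def by (intro sum.cong) (auto simp: power2_eq_square algebra_simps)
    also have "\<dots> = Q m + (s^2 * (\<Sum>i\<in>S. (m i)^2) - 2 * s * (\<Sum>i\<in>S. a i * m i))"
      by (simp add: Q_def sum.distrib sum_distrib_left sum_subtractf)
    finally have "2 * s * (\<Sum>i\<in>S. a i * m i) \<le> s * (s * (\<Sum>i\<in>S. (m i)^2))"
      by (simp add: power2_eq_square algebra_simps)
    thus "2 * (\<Sum>i\<in>S. a i * m i) \<le> s * (\<Sum>i\<in>S. (m i)^2)" using s
      by (simp add: mult.assoc)
  qed
  have "(\<Sum>i\<in>S. a i * z i) = (\<Sum>i\<in>S. a i * m i) - Q m"
    unfolding Q_def a_def by (simp add: sum_subtractf[symmetric] power2_eq_square algebra_simps)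
  hence "(\<Sum>i\<in>S. a i * z i) < 0" using am Qpos by linarith
  thus ?thesis using dir by blast
qed



lemma sm_add: "\<mu> \<in> signed_measures \<Longrightarrow> f \<in> cfun \<Longrightarrow> g \<in> cfun \<Longrightarrow> \<mu> (\<lambda>x. f x + g x) = \<mu> f + \<mu> g"
  by (simp add: signed_measures_def)
lemma sm_scale: "\<mu> \<in> signed_measures \<Longrightarrow> f \<in> cfun \<Longrightarrow> \<mu> (\<lambda>x. c * f x) = c * \<mu> f"
  by (simp add: signed_measures_def)
lemma sm_out: "\<mu> \<in> signed_measures \<Longrightarrow> f \<notin> cfun \<Longrightarrow> \<mu> f = 0"
  by (simp add: signed_measures_def)

lemma cfun_const [simp]: "(\<lambda>x. c) \<in> cfun" by (simp add: cfun_def)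
lemma cfun_add: "f \<in> cfun \<Longrightarrow> g \<in> cfun \<Longrightarrow> (\<lambda>x. f x + g x) \<in> cfun"
  by (simp add: cfun_def continuous_intros)
lemma cfun_scale: "f \<in> cfun \<Longrightarrow> (\<lambda>x. c * f x) \<in> cfun"
  by (simp add: cfun_def continuous_intros)

lemma sm_zero: "\<mu> \<in> signed_measures \<Longrightarrow> \<mu> (\<lambda>x. 0) = 0"
  using sm_scale[of \<mu> "\<lambda>x. 0" 0] by simp

lemma sm_sum:
  assumes "\<mu> \<in> signed_measures" "finite F" "F \<subseteq> cfun"
  shows "\<mu> (\<lambda>x. \<Sum>f\<in>F. c f * f x) = (\<Sum>f\<in>F. c f * \<mu> f) \<and> (\<lambda>x. \<Sum>f\<in>F. c f * f x) \<in> cfun"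
  using assms(2,3)
proof (induction F rule: finite_induct)
  case empty thus ?case using sm_zero[OF assms(1)] by simp
next
  case (insert a F)
  hence a: "a \<in> cfun" and IH: "\<mu> (\<lambda>x. \<Sum>f\<in>F. c f * f x) = (\<Sum>f\<in>F. c f * \<mu> f)" "(\<lambda>x. \<Sum>f\<in>F. c f * f x) \<in> cfun"
    by auto
  have "\<mu> (\<lambda>x. \<Sum>f\<in>insert a F. c f * f x) = \<mu> (\<lambda>x. c a * a x + (\<Sum>f\<in>F. c f * f x))"
    using insert by simp
  also have "\<dots> = \<mu> (\<lambda>x. c a * a x) + \<mu> (\<lambda>x. \<Sum>f\<in>F. c f * f x)"
    using sm_add[OF assms(1) cfun_scale[OF a] IH(2)] by simp
  also have "\<dots> = (\<Sum>f\<in>insert a F. c f * \<mu> f)" using IH insert sm_scale[OF assms(1) a] by simp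
  finally show ?case using insert cfun_add[OF cfun_scale[OF a] IH(2)] by simp
qed

lemma sm_scaled: fixes \<mu> :: "'a::topological_space msr" shows "\<mu> \<in> signed_measures \<Longrightarrow> (\<lambda>f. c * \<mu> f) \<in> signed_measures"
proof -
  assume m: "\<mu> \<in> signed_measures"
  then obtain C where C: "\<forall>f\<in>(cfun::('a\<Rightarrow>real) set). \<bar>\<mu> f\<bar> \<le> C * (SUP x. \<bar>f x\<bar>)" by (auto simp: signed_measures_def)
  have "\<forall>f\<in>(cfun::('a\<Rightarrow>real) set). \<bar>c * \<mu> f\<bar> \<le> (\<bar>c\<bar> * C) * (SUP x. \<bar>f x\<bar>)"
  proof
    fix f :: "'a \<Rightarrow> real" assume "f \<in> cfun"
    hence "\<bar>\<mu> f\<bar> \<le> C * (SUP x. \<bar>f x\<bar>)" using C by auto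
    hence "\<bar>c\<bar> * \<bar>\<mu> f\<bar> \<le> \<bar>c\<bar> * (C * (SUP x. \<bar>f x\<bar>))" by (intro mult_left_mono) auto
    thus "\<bar>c * \<mu> f\<bar> \<le> (\<bar>c\<bar> * C) * (SUP x. \<bar>f x\<bar>)" by (simp add: abs_mult mult.assoc)
  qed
  hence bound: "\<exists>C. \<forall>f\<in>(cfun::('a\<Rightarrow>real) set). \<bar>c * \<mu> f\<bar> \<le> C * (SUP x. \<bar>f x\<bar>)" by blast
  show ?thesis unfolding signed_measures_def mem_Collect_eq
    apply (intro conjI)
    subgoal using m by (auto simp: signed_measures_def algebra_simps)
    subgoal using m by (auto simp: signed_measures_def)
    subgoal using bound by blast
    subgoal using m by (auto simp: signed_measures_def)
    done
qed

lemma sm_sum2: fixes \<mu> \<nu> :: "'a::topological_space msr" shows "\<mu> \<in> signed_measures \<Longrightarrow> \<nu> \<in> signed_measures \<Longrightarrow> (\<lambda>f. \<mu> f + \<nu> f) \<in> signed_measures"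
proof -
  assume m: "\<mu> \<in> signed_measures" and n: "\<nu> \<in> signed_measures"
  then obtain C D where C: "\<forall>f\<in>(cfun::('a\<Rightarrow>real) set). \<bar>\<mu> f\<bar> \<le> C * (SUP x. \<bar>f x\<bar>)" and D: "\<forall>f\<in>(cfun::('a\<Rightarrow>real) set). \<bar>\<nu> f\<bar> \<le> D * (SUP x. \<bar>f x\<bar>)"
    by (auto simp: signed_measures_def)
  have "\<forall>f\<in>(cfun::('a\<Rightarrow>real) set). \<bar>\<mu> f + \<nu> f\<bar> \<le> (C + D) * (SUP x. \<bar>f x\<bar>)"
  proof
    fix f :: "'a \<Rightarrow> real" assume "f \<in> cfun"
    hence "\<bar>\<mu> f\<bar> \<le> C * (SUP x. \<bar>f x\<bar>)" "\<bar>\<nu> f\<bar> \<le> D * (SUP x. \<bar>f x\<bar>)" using C D by auto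
    thus "\<bar>\<mu> f + \<nu> f\<bar> \<le> (C + D) * (SUP x. \<bar>f x\<bar>)" by (simp add: algebra_simps)
  qed
  hence bound: "\<exists>C. \<forall>f\<in>(cfun::('a\<Rightarrow>real) set). \<bar>\<mu> f + \<nu> f\<bar> \<le> C * (SUP x. \<bar>f x\<bar>)" by blast
  show ?thesis unfolding signed_measures_def mem_Collect_eq
    apply (intro conjI)
    subgoal using m n by (auto simp: signed_measures_def algebra_simps)
    subgoal using m n by (auto simp: signed_measures_def algebra_simps)
    subgoal using bound by blast
    subgoal using m n by (auto simp: signed_measures_def)
    done
qed

lemma V_scale: "v \<in> Vspace \<Longrightarrow> scale_pair c v \<in> Vspace"
  by (auto simp: Vspace_def scale_pair_def zero_measures_def integ_def sm_scaled)

lemma V_neg: "v \<in> Vspace \<Longrightarrow> neg_pair v \<in> Vspace"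
  using V_scale[of v "-1"] by (simp add: scale_pair_def neg_pair_def)

lemma V_add: "v \<in> Vspace \<Longrightarrow> w \<in> Vspace \<Longrightarrow> add_pair v w \<in> Vspace"
  by (auto simp: Vspace_def add_pair_def zero_measures_def integ_def sm_sum2)

lemma cont_eval: "continuous_on UNIV (\<lambda>w::'a msr \<times> 'a msr. fst w f)"
  and cont_eval2: "continuous_on UNIV (\<lambda>w::'a msr \<times> 'a msr. snd w f)"
  using continuous_on_compose2[OF continuous_on_product_coordinates[of f] continuous_on_fst[OF continuous_on_id]]
  using continuous_on_compose2[OF continuous_on_product_coordinates[of f] continuous_on_snd[OF continuous_on_id]]
  by auto

lemma cont_scale_pair: "continuous_on UNIV (scale_pair c :: ('a msr \<times> 'a msr) \<Rightarrow> _)"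
  unfolding scale_pair_def
  by (intro continuous_on_Pair continuous_on_coordinatewise_then_product continuous_intros cont_eval cont_eval2)



definition cone_of :: "('a::topological_space msr \<times> 'a msr) set \<Rightarrow> ('a msr \<times> 'a msr) set" where
  "cone_of P = {scale_pair c p | c p. 0 \<le> c \<and> p \<in> P}"

lemma hat_cone: "hat P = Vspace \<inter> closure (cone_of P)"
  by (simp add: hat_def cone_of_def)

lemma scale_scale: "scale_pair c (scale_pair d p) = scale_pair (c * d) p"
  by (simp add: scale_pair_def mult.assoc)

lemma scale_one: "scale_pair 1 p = p"
  by (cases p) (simp add: scale_pair_def)

lemma P_hat: "P \<subseteq> Vspace \<Longrightarrow> p \<in> P \<Longrightarrow> p \<in> hat P"
  unfolding hat_cone cone_of_def
  using closure_subset[of "{scale_pair c p |c p. 0 \<le> c \<and> p \<in> P}"] scale_one[of p]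
  by (smt (verit, best) IntI in_mono mem_Collect_eq order_refl zero_le_one)

lemma hat_ineq:
  fixes \<phi> :: "'a::topological_space msr \<times> 'a msr \<Rightarrow> real"
  assumes "continuous_on UNIV \<phi>" "\<And>c p. 0 \<le> c \<Longrightarrow> p \<in> P \<Longrightarrow> 0 \<le> \<phi> (scale_pair c p)"
    and "w \<in> hat P"
  shows "0 \<le> \<phi> w"
proof -
  have "closed {w. 0 \<le> \<phi> w}" using assms(1) by (intro closed_Collect_le continuous_intros) auto
  moreover have "cone_of P \<subseteq> {w. 0 \<le> \<phi> w}" using assms(2) by (auto simp: cone_of_def)
  ultimately have "closure (cone_of P) \<subseteq> {w. 0 \<le> \<phi> w}" by (rule closure_minimal[rotated])
  thus ?thesis using assms(3) by (auto simp: hat_cone)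
qed

lemma hat_scale:
  assumes "w \<in> hat P" "0 \<le> c"
  shows "scale_pair c w \<in> hat P"
proof -
  have "scale_pair c ` closure (cone_of P) \<subseteq> closure (cone_of P)"
  proof (rule image_closure_subset)
    show "continuous_on (closure (cone_of P)) (scale_pair c)"
      using cont_scale_pair continuous_on_subset by blast
    show "scale_pair c ` cone_of P \<subseteq> closure (cone_of P)"
    proof
      fix x assume "x \<in> scale_pair c ` cone_of P"
      then obtain d p where "0 \<le> d" "p \<in> P" "x = scale_pair (c * d) p"
        by (auto simp: cone_of_def scale_scale)
      hence "x \<in> cone_of P" unfolding cone_of_def
        using mult_nonneg_nonneg[OF assms(2) \<open>0 \<le> d\<close>] by blast
      thus "x \<in> closure (cone_of P)" using closure_subset by blast
    qed
  qed simp
  moreover have "scale_pair c w \<in> Vspace" using assms(1) by (intro V_scale) (simp add: hat_cone)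
  ultimately show ?thesis using assms(1) by (auto simp: hat_cone)
qed

lemma hat_add:
  assumes "convex_pairs (hat P)" "x \<in> hat P" "y \<in> hat P"
  shows "add_pair x y \<in> hat P"
proof -
  have "add_pair (scale_pair (1/2) x) (scale_pair (1 - 1/2) y) \<in> hat P"
    using assms(1)[unfolded convex_pairs_def, rule_format, OF assms(2,3), of "1/2"] by simp
  hence "scale_pair 2 (add_pair (scale_pair (1/2) x) (scale_pair (1 - 1/2) y)) \<in> hat P"
    by (rule hat_scale) simp
  moreover have "scale_pair 2 (add_pair (scale_pair (1/2) x) (scale_pair (1 - 1/2) y)) = add_pair x y"
    by (simp add: scale_pair_def add_pair_def algebra_simps)
  ultimately show ?thesis by simp
qed

lemma open_fun_nbhd:
  fixes A :: "('b \<Rightarrow> real) set"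
  assumes "open A" "y \<in> A"
  shows "\<exists>F e. finite F \<and> e > 0 \<and> (\<forall>x. (\<forall>f\<in>F. \<bar>x f - y f\<bar> < e) \<longrightarrow> x \<in> A)"
proof -
  have "openin (product_topology (\<lambda>i. euclidean) UNIV) A" using assms(1) by (simp add: open_fun_def)
  from product_topology_open_contains_basis[OF this assms(2)]
  obtain X where X: "y \<in> (\<Pi>\<^sub>E i\<in>UNIV. X i)" "\<And>i. open (X i)" "finite {i. X i \<noteq> UNIV}"
    "(\<Pi>\<^sub>E i\<in>UNIV. X i) \<subseteq> A" by auto
  define F where "F = {i. X i \<noteq> UNIV}"
  have "\<forall>i. \<exists>r>0. ball (y i) r \<subseteq> X i"
    using X(1,2) by (metis PiE_E UNIV_I open_contains_ball)
  then obtain r where r: "\<And>i. r i > 0" "\<And>i. ball (y i) (r i) \<subseteq> X i" by metis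
  define e where "e = (if F = {} then 1 else Min (r ` F))"
  have fin: "finite F" using X(3) by (simp add: F_def)
  have epos: "e > 0" using fin r(1) by (auto simp: e_def)
  have ele: "e \<le> r i" if "i \<in> F" for i using fin that by (auto simp: e_def)
  have "x \<in> A" if x: "\<forall>f\<in>F. \<bar>x f - y f\<bar> < e" for x
  proof -
    have "x i \<in> X i" for i
    proof (cases "i \<in> F")
      case True
      hence "dist (x i) (y i) < r i" using x ele[OF True] by (auto simp: dist_real_def)
      thus ?thesis using r(2)[of i] by (auto simp: dist_commute)
    next
      case False thus ?thesis by (auto simp: F_def)
    qed
    hence "x \<in> (\<Pi>\<^sub>E i\<in>UNIV. X i)" by auto
    thus ?thesis using X(4) by auto
  qed
  thus ?thesis using fin epos by blast
qed



lemma V_sm: "w \<in> Vspace \<Longrightarrow> fst w \<in> signed_measures \<and> snd w \<in> signed_measures \<and> fst w (\<lambda>x. 1) = 0"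
  by (auto simp: Vspace_def zero_measures_def integ_def)

lemma hat_V: "w \<in> hat P \<Longrightarrow> w \<in> Vspace" by (simp add: hat_def)

lemma sep2:
  fixes P :: "('a::topological_space msr \<times> 'a msr) set" and \<eta>0 T0 \<eta> g :: "'a \<Rightarrow> real"
  assumes cpt: "compact (UNIV :: 'a set)" and PV: "P \<subseteq> Vspace"
    and cd: "clausius_duhem P \<eta>0 T0"
    and uniq: "\<And>\<eta> T. clausius_duhem P \<eta> T \<Longrightarrow> \<exists>\<alpha>>0. \<exists>\<beta>. T = (\<lambda>x. \<alpha> * T0 x) \<and> \<eta> = (\<lambda>x. \<eta>0 x / \<alpha> + \<beta>)"
    and v: "v \<in> Vspace" and \<eta>c: "\<eta> \<in> cfun" and gc: "g \<in> cfun"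
    and lv: "fst v \<eta> + snd v g < 0" and lw: "\<And>w. w \<in> hat P \<Longrightarrow> 0 \<le> fst w \<eta> + snd w g"
  shows "\<exists>k. k * (fst v \<eta>0 - snd v (\<lambda>x. 1 / T0 x)) < 0 \<and>
             (\<forall>w\<in>hat P. 0 \<le> k * (fst w \<eta>0 - snd w (\<lambda>x. 1 / T0 x)))"
proof -
  have \<eta>0c: "\<eta>0 \<in> cfun" and T0c: "continuous_on UNIV T0" and T0p: "\<And>x. 0 < T0 x"
    and cdi: "\<And>dm q. (dm, q) \<in> P \<Longrightarrow> dm \<eta>0 \<ge> q (\<lambda>x. 1 / T0 x)"
    using cd by (auto simp: clausius_duhem_def cfun_def integ_def)
  have iTc: "(\<lambda>x. 1 / T0 x) \<in> cfun" unfolding cfun_def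
    using T0c T0p by (auto intro!: continuous_intros simp: less_imp_neq[symmetric])
  obtain xm where xm: "\<And>x. T0 x \<le> T0 xm"
    using continuous_attains_sup[OF cpt _ T0c] by auto
  define M where "M = T0 xm"
  have Mpos: "M > 0" using T0p by (simp add: M_def)
  have gcont: "continuous_on UNIV (\<lambda>x. \<bar>g x\<bar>)" using gc by (auto simp: cfun_def intro!: continuous_intros)
  obtain xg where xg: "\<And>x. \<bar>g x\<bar> \<le> \<bar>g xg\<bar>"
    using continuous_attains_sup[OF cpt _ gcont] by auto
  define Bg where "Bg = \<bar>g xg\<bar>"
  have Bg0: "Bg \<ge> 0" by (simp add: Bg_def)
  define s where "s = 1 / (2 * M * (Bg + 1))"
  have spos: "s > 0" using Mpos Bg0 by (simp add: s_def)
  have pos: "0 < 1 / T0 x - s * g x" for x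
  proof -
    have "s * g x \<le> s * \<bar>g x\<bar>" using spos by (intro mult_left_mono) auto
    also have "\<dots> \<le> s * Bg" using spos xg[of x] by (intro mult_left_mono) (auto simp: Bg_def)
    also have "\<dots> = (Bg / (Bg + 1)) * (1 / (2 * M))" using Mpos Bg0 by (simp add: s_def)
    also have "\<dots> \<le> 1 * (1 / (2 * M))" using Mpos Bg0 by (intro mult_right_mono) auto
    also have "\<dots> < 1 / M" using Mpos by (simp add: field_simps)
    also have "1 / M \<le> 1 / T0 x" using xm[of x] T0p[of x] by (simp add: M_def frac_le)
    finally show ?thesis by simp
  qed
  define Ts where "Ts x = 1 / (1 / T0 x - s * g x)" for x
  define \<eta>s where "\<eta>s x = \<eta>0 x + s * \<eta> x" for x
  have iTs: "(\<lambda>x. 1 / Ts x) = (\<lambda>x. 1 / T0 x + (- s) * g x)" by (simp add: Ts_def fun_eq_iff)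
  have "clausius_duhem P \<eta>s Ts"
    unfolding clausius_duhem_def
  proof (intro conjI allI ballI)
    show "continuous_on UNIV \<eta>s" unfolding \<eta>s_def[abs_def]
      using \<eta>0c \<eta>c by (auto simp: cfun_def intro!: continuous_intros)
    show "continuous_on UNIV Ts" unfolding Ts_def[abs_def]
      using T0c T0p gc pos by (auto simp: cfun_def less_imp_neq[symmetric] intro!: continuous_intros)
    show "0 < Ts x" for x using pos[of x] by (simp add: Ts_def)
    fix w assume wP: "w \<in> P"
    obtain dm q where w: "w = (dm, q)" by force
    have sm: "dm \<in> signed_measures" "q \<in> signed_measures" using V_sm[of w] PV wP w by auto
    have "q (\<lambda>x. 1 / Ts x) = q (\<lambda>x. 1 / T0 x) + (- s) * q g"
      unfolding iTs using sm_add[OF sm(2) iTc cfun_scale[OF gc, of "-s"]] sm_scale[OF sm(2) gc, of "-s"] by simp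
    moreover have "dm \<eta>s = dm \<eta>0 + s * dm \<eta>"
      unfolding \<eta>s_def[abs_def] using sm_add[OF sm(1) \<eta>0c cfun_scale[OF \<eta>c, of s]] sm_scale[OF sm(1) \<eta>c, of s] by simp
    moreover have "dm \<eta>0 \<ge> q (\<lambda>x. 1 / T0 x)" using cdi wP w by auto
    moreover have "0 \<le> dm \<eta> + q g" using lw[of w] P_hat[OF PV wP] w by simp
    moreover have "0 \<le> s * dm \<eta> + s * q g"
      using mult_nonneg_nonneg[of s "dm \<eta> + q g"] spos \<open>0 \<le> dm \<eta> + q g\<close> by (simp add: distrib_left)
    ultimately have "dm \<eta>s \<ge> q (\<lambda>x. 1 / Ts x)" by simp
    thus "case w of (dm, q) \<Rightarrow> integ q (\<lambda>x. 1 / Ts x) \<le> integ dm \<eta>s" using w by (simp add: integ_def)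
  qed
  from uniq[OF this] obtain \<alpha> \<beta> where ab: "\<alpha> > 0" "Ts = (\<lambda>x. \<alpha> * T0 x)" "\<eta>s = (\<lambda>x. \<eta>0 x / \<alpha> + \<beta>)"
    by blast
  define c where "c = 1 / \<alpha> - 1"
  have sg: "(\<lambda>x. s * g x) = (\<lambda>x. (- c) * (1 / T0 x))"
  proof
    fix x
    have "1 / (1 / T0 x - s * g x) = \<alpha> * T0 x" using ab(2) by (simp add: Ts_def fun_eq_iff)
    hence "1 / T0 x - s * g x = 1 / (\<alpha> * T0 x)"
      by (metis divide_divide_eq_right div_by_1 mult.commute mult_1 divide_inverse_commute inverse_eq_divide inverse_inverse_eq)
    hence "s * g x = 1 / T0 x - 1 / (\<alpha> * T0 x)" by linarith
    also have "\<dots> = (- c) * (1 / T0 x)" using ab(1) T0p[of x] by (simp add: c_def field_simps)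
    finally show "s * g x = (- c) * (1 / T0 x)" .
  qed
  have s\<eta>: "(\<lambda>x. s * \<eta> x) = (\<lambda>x. c * \<eta>0 x + \<beta>)"
  proof
    fix x
    have "\<eta>0 x + s * \<eta> x = \<eta>0 x / \<alpha> + \<beta>" using ab(3) by (simp add: \<eta>s_def fun_eq_iff)
    thus "s * \<eta> x = c * \<eta>0 x + \<beta>" using ab(1) by (simp add: c_def field_simps)
  qed
  have key: "fst w \<eta> + snd w g = (c / s) * (fst w \<eta>0 - snd w (\<lambda>x. 1 / T0 x))" if "w \<in> Vspace" for w
  proof -
    have sm: "fst w \<in> signed_measures" "snd w \<in> signed_measures" "fst w (\<lambda>x. 1) = 0" using V_sm[OF that] by auto
    have "s * fst w \<eta> = fst w (\<lambda>x. s * \<eta> x)" using sm_scale[OF sm(1) \<eta>c] by simp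
    also have "\<dots> = fst w (\<lambda>x. c * \<eta>0 x) + fst w (\<lambda>x. \<beta> * 1)"
      unfolding s\<eta> using sm_add[OF sm(1) cfun_scale[OF \<eta>0c, of c] cfun_const[of \<beta>]] by simp
    also have "\<dots> = c * fst w \<eta>0" using sm_scale[OF sm(1) \<eta>0c, of c] sm_scale[OF sm(1) cfun_const[of 1], of \<beta>] sm(3) by simp
    finally have 1: "s * fst w \<eta> = c * fst w \<eta>0" .
    have "s * snd w g = snd w (\<lambda>x. s * g x)" using sm_scale[OF sm(2) gc] by simp
    also have "\<dots> = (- c) * snd w (\<lambda>x. 1 / T0 x)" unfolding sg using sm_scale[OF sm(2) iTc, of "-c"] by simp
    finally have 2: "s * snd w g = (- c) * snd w (\<lambda>x. 1 / T0 x)" .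
    have eq: "s * (fst w \<eta> + snd w g) = c * (fst w \<eta>0 - snd w (\<lambda>x. 1 / T0 x))"
      using 1 2 by (simp add: algebra_simps)
    have "fst w \<eta> + snd w g = (s * (fst w \<eta> + snd w g)) / s" using spos by simp
    also have "\<dots> = (c / s) * (fst w \<eta>0 - snd w (\<lambda>x. 1 / T0 x))" unfolding eq by simp
    finally show ?thesis .
  qed
  have "\<forall>w\<in>hat P. 0 \<le> (c / s) * (fst w \<eta>0 - snd w (\<lambda>x. 1 / T0 x))"
  proof
    fix w assume "w \<in> hat P"
    thus "0 \<le> (c / s) * (fst w \<eta>0 - snd w (\<lambda>x. 1 / T0 x))"
      using lw[of w] key[OF hat_V[of w P]] by simp
  qed
  moreover have "(c / s) * (fst v \<eta>0 - snd v (\<lambda>x. 1 / T0 x)) < 0" using key[OF v] lv by simp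
  ultimately show ?thesis by blast
qed



lemma sep:
  fixes P :: "('a::topological_space msr \<times> 'a msr) set" and \<eta>0 T0 :: "'a \<Rightarrow> real"
  assumes cpt: "compact (UNIV :: 'a set)" and PV: "P \<subseteq> Vspace" and cvx: "convex_pairs (hat P)"
    and z0: "(zero_msr, zero_msr) \<in> hat P"
    and cd: "clausius_duhem P \<eta>0 T0"
    and uniq: "\<And>\<eta> T. clausius_duhem P \<eta> T \<Longrightarrow> \<exists>\<alpha>>0. \<exists>\<beta>. T = (\<lambda>x. \<alpha> * T0 x) \<and> \<eta> = (\<lambda>x. \<eta>0 x / \<alpha> + \<beta>)"
    and v: "v \<in> Vspace" and nv: "v \<notin> hat P"
  shows "\<exists>k. k * (fst v \<eta>0 - snd v (\<lambda>x. 1 / T0 x)) < 0 \<and>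
             (\<forall>w\<in>hat P. 0 \<le> k * (fst w \<eta>0 - snd w (\<lambda>x. 1 / T0 x)))"
proof -
  have vcl: "v \<notin> closure (cone_of P)" using v nv by (auto simp: hat_cone)
  have "open (- closure (cone_of P))" "v \<in> - closure (cone_of P)" using vcl by auto
  then obtain A B where AB: "open A" "open B" "v \<in> A \<times> B" "A \<times> B \<subseteq> - closure (cone_of P)"
    by (rule open_prod_elim)
  have "fst v \<in> A" "snd v \<in> B" using AB(3) by (auto simp: mem_Times_iff)
  obtain F1 e1 where F1: "finite F1" "e1 > 0" "\<And>x. (\<forall>f\<in>F1. \<bar>x f - fst v f\<bar> < e1) \<Longrightarrow> x \<in> A"
    using open_fun_nbhd[OF AB(1) \<open>fst v \<in> A\<close>] by blast
  obtain F2 e2 where F2: "finite F2" "e2 > 0" "\<And>x. (\<forall>f\<in>F2. \<bar>x f - snd v f\<bar> < e2) \<Longrightarrow> x \<in> B"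
    using open_fun_nbhd[OF AB(2) \<open>snd v \<in> B\<close>] by blast
  define e where "e = min e1 e2"
  have epos: "e > 0" using F1 F2 by (simp add: e_def)
  have far: "(\<exists>f\<in>F1. e \<le> \<bar>fst w f - fst v f\<bar>) \<or> (\<exists>f\<in>F2. e \<le> \<bar>snd w f - snd v f\<bar>)"
    if w: "w \<in> hat P" for w
  proof (rule ccontr)
    assume "\<not> ?thesis"
    hence h: "\<forall>f\<in>F1. \<bar>fst w f - fst v f\<bar> < e1" "\<forall>f\<in>F2. \<bar>snd w f - snd v f\<bar> < e2"
      by (auto simp: e_def not_le)
    have "fst w \<in> A" "snd w \<in> B" using F1(3)[OF h(1)] F2(3)[OF h(2)] by auto
    hence "w \<in> A \<times> B" by (simp add: mem_Times_iff)
    moreover have "w \<in> closure (cone_of P)" using w by (simp add: hat_cone)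
    ultimately show False using AB(4) by auto
  qed
  define S :: "(('a \<Rightarrow> real) + ('a \<Rightarrow> real)) set" where "S = Inl ` F1 \<union> Inr ` F2"
  have finS: "finite S" using F1 F2 by (simp add: S_def)
  define \<pi> where "\<pi> w = (\<lambda>i. if i \<in> S then case_sum (fst w) (snd w) i else 0)" for w :: "'a msr \<times> 'a msr"
  define D where "D = \<pi> ` hat P"
  have "\<exists>a. (\<Sum>i\<in>S. a i * \<pi> v i) < 0 \<and> (\<forall>d\<in>D. 0 \<le> (\<Sum>i\<in>S. a i * d i))"
  proof (rule fin_sep[OF finS _ _ _ _ _ epos])
    show "\<And>d i. d \<in> D \<Longrightarrow> i \<notin> S \<Longrightarrow> d i = 0" by (auto simp: D_def \<pi>_def)
    have "\<pi> (zero_msr, zero_msr) = (\<lambda>_. 0)" by (auto simp: \<pi>_def zero_msr_def fun_eq_iff split: sum.split)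
    thus "(\<lambda>_. 0) \<in> D" using z0 unfolding D_def by force
    show "(\<lambda>i. d i + d2 i) \<in> D" if dd: "d \<in> D" "d2 \<in> D" for d d2
    proof -
      obtain x y where "x \<in> hat P" "y \<in> hat P" "d = \<pi> x" "d2 = \<pi> y" using dd unfolding D_def by blast
      moreover have "\<pi> (add_pair x y) = (\<lambda>i. \<pi> x i + \<pi> y i)"
        by (auto simp: \<pi>_def add_pair_def fun_eq_iff split: sum.split)
      ultimately show ?thesis using hat_add[OF cvx] unfolding D_def by (metis image_eqI)
    qed
    show "(\<lambda>i. c * d i) \<in> D" if dd: "d \<in> D" "c \<ge> 0" for d c
    proof -
      obtain x where "x \<in> hat P" "d = \<pi> x" using dd(1) unfolding D_def by blast
      moreover have "\<pi> (scale_pair c x) = (\<lambda>i. c * \<pi> x i)"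
        by (auto simp: \<pi>_def scale_pair_def fun_eq_iff split: sum.split)
      ultimately show ?thesis using hat_scale[OF _ dd(2)] unfolding D_def by (metis image_eqI)
    qed
    show "\<exists>i\<in>S. e \<le> \<bar>d i - \<pi> v i\<bar>" if dd: "d \<in> D" for d
    proof -
      obtain w where w: "w \<in> hat P" "d = \<pi> w" using dd unfolding D_def by blast
      from far[OF w(1)] show ?thesis
      proof
        assume "\<exists>f\<in>F1. e \<le> \<bar>fst w f - fst v f\<bar>"
        then obtain f where "f \<in> F1" "e \<le> \<bar>fst w f - fst v f\<bar>" by blast
        thus ?thesis using w(2) by (intro bexI[of _ "Inl f"]) (auto simp: \<pi>_def S_def)
      next
        assume "\<exists>f\<in>F2. e \<le> \<bar>snd w f - snd v f\<bar>"
        then obtain f where "f \<in> F2" "e \<le> \<bar>snd w f - snd v f\<bar>" by blast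
        thus ?thesis using w(2) by (intro bexI[of _ "Inr f"]) (auto simp: \<pi>_def S_def)
      qed
    qed
  qed
  then obtain a where a: "(\<Sum>i\<in>S. a i * \<pi> v i) < 0" "\<And>d. d \<in> D \<Longrightarrow> 0 \<le> (\<Sum>i\<in>S. a i * d i)"
    by blast
  define \<eta> where "\<eta> x = (\<Sum>f\<in>F1 \<inter> cfun. a (Inl f) * f x)" for x
  define g where "g x = (\<Sum>f\<in>F2 \<inter> cfun. a (Inr f) * f x)" for x
  have part: "(\<Sum>f\<in>F. c f * \<mu> f) = \<mu> (\<lambda>x. \<Sum>f\<in>F \<inter> cfun. c f * f x)"
    if "\<mu> \<in> signed_measures" "finite F" for \<mu> :: "'a msr" and F c
  proof -
    have "(\<Sum>f\<in>F. c f * \<mu> f) = (\<Sum>f\<in>F \<inter> cfun. c f * \<mu> f)"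
      using that by (intro sum.mono_neutral_right) (auto simp: sm_out)
    also have "\<dots> = \<mu> (\<lambda>x. \<Sum>f\<in>F \<inter> cfun. c f * f x)"
      using sm_sum[of \<mu> "F \<inter> cfun" c] that by auto
    finally show ?thesis .
  qed
  have ell: "(\<Sum>i\<in>S. a i * \<pi> w i) = fst w \<eta> + snd w g" if "w \<in> Vspace" for w
  proof -
    have sm: "fst w \<in> signed_measures" "snd w \<in> signed_measures" using V_sm[OF that] by auto
    have "(\<Sum>i\<in>S. a i * \<pi> w i) = (\<Sum>i\<in>S. a i * case_sum (fst w) (snd w) i)"
      by (intro sum.cong) (auto simp: \<pi>_def)
    also have "\<dots> = (\<Sum>i\<in>Inl ` F1. a i * case_sum (fst w) (snd w) i) + (\<Sum>i\<in>Inr ` F2. a i * case_sum (fst w) (snd w) i)"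
      unfolding S_def using F1 F2 by (intro sum.union_disjoint) auto
    also have "\<dots> = (\<Sum>f\<in>F1. a (Inl f) * fst w f) + (\<Sum>f\<in>F2. a (Inr f) * snd w f)"
      by (simp add: sum.reindex)
    also have "\<dots> = fst w \<eta> + snd w g"
      using part[OF sm(1) F1(1), of "\<lambda>f. a (Inl f)"] part[OF sm(2) F2(1), of "\<lambda>f. a (Inr f)"]
      by (simp add: \<eta>_def[abs_def] g_def[abs_def])
    finally show ?thesis .
  qed
  have lv: "fst v \<eta> + snd v g < 0" using a(1) ell[OF v] by simp
  have lw: "0 \<le> fst w \<eta> + snd w g" if "w \<in> hat P" for w
    using a(2)[of "\<pi> w"] that ell[OF hat_V[OF that]] by (auto simp: D_def)
  have \<eta>c: "\<eta> \<in> cfun"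
    using sm_sum[of "fst v" "F1 \<inter> cfun" "\<lambda>f. a (Inl f)"] V_sm[OF v] F1(1) unfolding \<eta>_def[abs_def] by auto
  have gc: "g \<in> cfun"
    using sm_sum[of "snd v" "F2 \<inter> cfun" "\<lambda>f. a (Inr f)"] V_sm[OF v] F2(1) unfolding g_def[abs_def] by auto
  show ?thesis using sep2[OF cpt PV cd uniq v \<eta>c gc lv lw] by blast
qed


theorem corollary5p1:
  fixes P :: "('a::t2_space msr \<times> 'a msr) set" and \<eta>0 T0 :: "'a \<Rightarrow> real"
  assumes "compact (UNIV :: 'a set)"
    and "kelvin_planck P"
    and "clausius_duhem P \<eta>0 T0"
    and "\<And>\<eta> T. clausius_duhem P \<eta> T \<Longrightarrow>
           \<exists>\<alpha>>0. \<exists>\<beta>. T = (\<lambda>x. \<alpha> * T0 x) \<and> \<eta> = (\<lambda>x. \<eta>0 x / \<alpha> + \<beta>)"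
  shows "{v. reversible P v} =
           {(dm, q) \<in> Vspace. integ dm \<eta>0 = integ q (\<lambda>x. 1 / T0 x)}
       \<and> ((\<exists>v\<in>{(dm, q) \<in> Vspace. integ dm \<eta>0 > integ q (\<lambda>x. 1 / T0 x)}. v \<in> hat P) \<longrightarrow>
           {(dm, q) \<in> Vspace. integ dm \<eta>0 > integ q (\<lambda>x. 1 / T0 x)} \<subseteq> hat P)
       \<and> ((\<exists>p\<in>P. \<not> reversible P p) \<longrightarrow>
           {(dm, q) \<in> Vspace. integ dm \<eta>0 \<ge> integ q (\<lambda>x. 1 / T0 x)} \<subseteq> hat P)"
proof -
  note cpt = assms(1) and cd = assms(3) and uniq = assms(4)
  have PV: "P \<subseteq> Vspace" and cvx: "convex_pairs (hat P)"
    using assms(2) by (auto simp: kelvin_planck_def thermo_theory_def)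
  have "hat P \<inter> {(zero_msr, \<nu>) | \<nu>. \<nu> \<in> nonneg_measures} = {(zero_msr, zero_msr)}"
    using assms(2) unfolding kelvin_planck_def by (rule conjunct2)
  hence "(zero_msr, zero_msr) \<in> hat P \<inter> {(zero_msr, \<nu>) | \<nu>. \<nu> \<in> nonneg_measures}" by simp
  hence z0: "(zero_msr, zero_msr) \<in> hat P" by (rule IntD1)
  define L where "L w = fst w \<eta>0 - snd w (\<lambda>x. 1 / T0 x)" for w :: "'a msr \<times> 'a msr"
  have memset: "\<And>Q v. v \<in> {(dm, q) \<in> Vspace. Q dm q} \<longleftrightarrow> v \<in> Vspace \<and> Q (fst v) (snd v)"
    by auto
  have cdi: "\<And>dm q. (dm, q) \<in> P \<Longrightarrow> dm \<eta>0 \<ge> q (\<lambda>x. 1 / T0 x)"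
    using cd by (auto simp: clausius_duhem_def integ_def)
  have hatL: "0 \<le> L w" if "w \<in> hat P" for w
  proof (rule hat_ineq[OF _ _ that])
    show "continuous_on UNIV L" unfolding L_def[abs_def]
      by (intro continuous_on_diff cont_eval cont_eval2)
    show "0 \<le> L (scale_pair c p)" if "0 \<le> c" "p \<in> P" for c p
    proof -
      have "L (scale_pair c p) = c * L p" by (simp add: L_def scale_pair_def algebra_simps)
      moreover have "0 \<le> L p" using cdi[of "fst p" "snd p"] that(2) by (simp add: L_def)
      ultimately show ?thesis using that(1) by simp
    qed
  qed
  have SEP: "\<exists>k. k * L v < 0 \<and> (\<forall>w\<in>hat P. 0 \<le> k * L w)" if "v \<in> Vspace" "v \<notin> hat P" for v
    using sep[OF cpt PV cvx z0 cd uniq that] unfolding L_def by blast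
  have zeroL: "v \<in> hat P" if "v \<in> Vspace" "L v = 0" for v
    by (rule ccontr) (use SEP[OF that(1)] that(2) in auto)
  have negL: "L (neg_pair v) = - L v" for v by (simp add: L_def neg_pair_def)
  have A: "{v. reversible P v} = {(dm, q) \<in> Vspace. integ dm \<eta>0 = integ q (\<lambda>x. 1 / T0 x)}"
  proof (intro set_eqI iffI)
    fix v assume "v \<in> {v. reversible P v}"
    hence "v \<in> hat P" "neg_pair v \<in> hat P" by (auto simp: reversible_def)
    hence "v \<in> Vspace" "0 \<le> L v" "0 \<le> L (neg_pair v)" using hatL hat_V by blast+
    hence "v \<in> Vspace" "L v = 0" using negL[of v] by auto
    thus "v \<in> {(dm, q) \<in> Vspace. integ dm \<eta>0 = integ q (\<lambda>x. 1 / T0 x)}"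
      unfolding memset by (simp add: L_def integ_def)
  next
    fix v assume "v \<in> {(dm, q) \<in> Vspace. integ dm \<eta>0 = integ q (\<lambda>x. 1 / T0 x)}"
    hence v: "v \<in> Vspace" "L v = 0" unfolding memset by (auto simp: L_def integ_def)
    show "v \<in> {v. reversible P v}"
      using zeroL[OF v] zeroL[OF V_neg[OF v(1)]] negL[of v] v(2) by (simp add: reversible_def)
  qed
  have B: "v \<in> hat P" if u: "u \<in> hat P" "L u > 0" and v: "v \<in> Vspace" "L v > 0" for u v
  proof (rule ccontr)
    assume "v \<notin> hat P"
    then obtain k where k: "k * L v < 0" "\<forall>w\<in>hat P. 0 \<le> k * L w" using SEP[OF v(1)] by blast
    have "0 \<le> k * L u" using k(2) u(1) by blast
    hence "0 \<le> k" using u(2) by (simp add: zero_le_mult_iff)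
    thus False using k(1) v(2) by (simp add: mult_less_0_iff)
  qed
  have b: "(\<exists>v\<in>{(dm, q) \<in> Vspace. integ dm \<eta>0 > integ q (\<lambda>x. 1 / T0 x)}. v \<in> hat P) \<longrightarrow>
           {(dm, q) \<in> Vspace. integ dm \<eta>0 > integ q (\<lambda>x. 1 / T0 x)} \<subseteq> hat P"
  proof (intro impI subsetI)
    fix v assume "\<exists>v\<in>{(dm, q) \<in> Vspace. integ dm \<eta>0 > integ q (\<lambda>x. 1 / T0 x)}. v \<in> hat P"
    then obtain u where "u \<in> hat P" "L u > 0" unfolding memset by (auto simp: L_def integ_def)
    moreover assume "v \<in> {(dm, q) \<in> Vspace. integ dm \<eta>0 > integ q (\<lambda>x. 1 / T0 x)}"
    hence "v \<in> Vspace" "L v > 0" unfolding memset by (auto simp: L_def integ_def)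
    ultimately show "v \<in> hat P" by (rule B)
  qed
  have c: "(\<exists>p\<in>P. \<not> reversible P p) \<longrightarrow>
           {(dm, q) \<in> Vspace. integ dm \<eta>0 \<ge> integ q (\<lambda>x. 1 / T0 x)} \<subseteq> hat P"
  proof (intro impI subsetI)
    assume "\<exists>p\<in>P. \<not> reversible P p"
    then obtain p where p: "p \<in> P" "\<not> reversible P p" by blast
    have ph: "p \<in> hat P" using P_hat[OF PV p(1)] .
    have "L p \<noteq> 0"
    proof
      assume "L p = 0"
      hence "p \<in> {(dm, q) \<in> Vspace. integ dm \<eta>0 = integ q (\<lambda>x. 1 / T0 x)}"
        using hat_V[OF ph] unfolding memset by (simp add: L_def integ_def)
      thus False using A p(2) by blast
    qed
    hence Lp: "L p > 0" using hatL[OF ph] by simp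
    fix v assume "v \<in> {(dm, q) \<in> Vspace. integ dm \<eta>0 \<ge> integ q (\<lambda>x. 1 / T0 x)}"
    hence v: "v \<in> Vspace" "L v \<ge> 0" unfolding memset by (auto simp: L_def integ_def)
    show "v \<in> hat P"
    proof (cases "L v = 0")
      case True thus ?thesis using zeroL v by blast
    next
      case False thus ?thesis using B[OF ph Lp v(1)] v(2) by simp
    qed
  qed
  show ?thesis by (rule conjI[OF A conjI[OF b c]])
qed

end
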